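(* Let $q>1$, $\Sigma\sim\mathrm{Mallows}(\mathbb{Z},1/q)$, $c_e:=\mathbb{E}\,C_1(\rho\circ\Sigma)$ and $c_o:=\mathbb{E}\,C_1(r\circ\Sigma)$. Then $$\frac{1}{1+q}\le c_e\le\frac{q}{1+q}\qquad\text{and}\qquad\frac{1}{1+q}\le c_o\le\frac{q}{1+q}.$$
   Context: For a finite set $A\subseteq\mathbb{Z}$ and a bijection $\pi:A\to A$, $\mathrm{inv}(\pi)$ is the number of pairs $i<j$ in $A$ with $\pi(i)>\pi(j)$, and $\Pi_A\sim\mathrm{Mallows}(A,q)$ means $\mathbb{P}(\Pi_A=\pi)\propto q^{\mathrm{inv}(\pi)}$ over bijections $\pi$ of $A$. For a bijection $\sigma$ of a set $B\subseteq\mathbb{Z}$ and finite $A\subseteq B$, the pattern $\sigma_A:A\to A$ is defined by $\sigma_A(a)=a_{(i)}$ when $\sigma(a)$ is the $i$-th smallest element of $\sigma[A]$, where $a_{(i)}$ is the $i$-th smallest element of $A$. For $0<p<1$, $\mathrm{Mallows}(\mathbb{Z},p)$ is Gnedin and Olshanski's bi-infinite Mallows measure: the law of a random bijection $\Sigma$ of $\mathbb{Z}$ such that $\Sigma_I\sim\mathrm{Mallows}(I,p)$ for every finite interval of integers $I$, and, with $I_n=\{-n,\dots,n\}$, almost surely for every $i\in\mathbb{Z}$ one has $\Sigma_{I_n}(i)=\Sigma(i)$ for all sufficiently large $n$. $C_1(\pi)$ is the number of fixed points of a permutation $\pi$ of $\mathbb{Z}$; $r(i)=-i$, $\rho(i)=1-i$.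 *)

theory Defs
  imports "HOL-Probability.Probability" "HOL-Combinatorics.Permutations"
begin

definition inv_count :: "(int \<Rightarrow> int) \<Rightarrow> int set \<Rightarrow> nat" where
  "inv_count \<pi> A = card {(i, j). i \<in> A \<and> j \<in> A \<and> i < j \<and> \<pi> i > \<pi> j}"

text \<open>Mallows(A,q) probability of a bijection \<pi> of A (bijections of A are
  represented as permutations of int fixing everything outside A).\<close>
definition mallows_weight :: "real \<Rightarrow> int set \<Rightarrow> (int \<Rightarrow> int) \<Rightarrow> real" where
  "mallows_weight q A \<pi> =
     q ^ inv_count \<pi> A / (\<Sum>tau \<in> {tau. tau permutes A}. q ^ inv_count tau A)"

text \<open>Pattern sigma_A: a in A is sent to the i-th smallest element of A, where
  \<sigma> a is the i-th smallest element of sigma[A] (0-based indexing here);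
  identity outside A.\<close>
definition pattern :: "(int \<Rightarrow> int) \<Rightarrow> int set \<Rightarrow> int \<Rightarrow> int" where
  "pattern \<sigma> A a =
     (if a \<in> A then sorted_list_of_set A ! card {b \<in> A. \<sigma> b < \<sigma> a} else a)"

definition mallows_Z :: "'w measure \<Rightarrow> ('w \<Rightarrow> int \<Rightarrow> int) \<Rightarrow> real \<Rightarrow> bool" where
  "mallows_Z M Sig p \<longleftrightarrow>
     prob_space M \<and>
     (\<forall>w \<in> space M. bij (Sig w)) \<and>
     (\<forall>i. (\<lambda>w. Sig w i) \<in> measurable M (count_space UNIV)) \<and>
     (\<forall>a b :: int. \<forall>\<pi>. \<pi> permutes {a..b} \<longrightarrow>
        {w \<in> space M. pattern (Sig w) {a..b} = \<pi>} \<in> sets M \<and>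
        measure M {w \<in> space M. pattern (Sig w) {a..b} = \<pi>} = mallows_weight p {a..b} \<pi>) \<and>
     (AE w in M. \<forall>i. eventually (\<lambda>n::nat. pattern (Sig w) {- int n..int n} i = Sig w i) sequentially)"

definition C1 :: "(int \<Rightarrow> int) \<Rightarrow> ennreal" where
  "C1 \<pi> = emeasure (count_space UNIV) {i. \<pi> i = i}"

definition r_map :: "int \<Rightarrow> int" where "r_map i = - i"
definition rho_map :: "int \<Rightarrow> int" where "rho_map i = 1 - i"

end

theory Submission
  imports Defs
begin


definition sw :: "int \<Rightarrow> int \<Rightarrow> int" where "sw v = Transposition.transpose v (v+1)"

lemma sw_apply: "sw v x = (if x = v then v+1 else if x = v+1 then v else x)"
  by (simp add: sw_def transpose_def)

lemma sw_sw[simp]: "sw v (sw v x) = x"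
  by (simp add: sw_apply)

lemma sw_comp_sw[simp]: "sw v \<circ> (sw v \<circ> f) = f"
  by (auto simp: fun_eq_iff)

lemma sw_order: "x \<noteq> y \<Longrightarrow> \<not> (x = v \<and> y = v+1) \<Longrightarrow> \<not> (x = v+1 \<and> y = v) \<Longrightarrow>
   (sw v x < sw v y \<longleftrightarrow> x < y)"
  by (auto simp: sw_apply)

lemma sw_permutes: "v \<in> J \<Longrightarrow> v+1 \<in> J \<Longrightarrow> \<pi> permutes J \<Longrightarrow> (sw v \<circ> \<pi>) permutes J"
  unfolding sw_def by (intro permutes_compose permutes_swap_id) auto

definition invs :: "(int \<Rightarrow> int) \<Rightarrow> int set \<Rightarrow> (int \<times> int) set" where
  "invs \<pi> A = {(i, j). i \<in> A \<and> j \<in> A \<and> i < j \<and> \<pi> i > \<pi> j}"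

lemma inv_count_invs: "inv_count \<pi> A = card (invs \<pi> A)"
  by (simp add: inv_count_def invs_def)

lemma finite_invs: "finite A \<Longrightarrow> finite (invs \<pi> A)"
  by (rule finite_subset[of _ "A \<times> A"]) (auto simp: invs_def)

lemma inv_sw_up:
  assumes "finite J" "\<pi> permutes J" "P \<in> J" "Q \<in> J" "\<pi> P = v" "\<pi> Q = v+1" "P < Q"
  shows "inv_count (sw v \<circ> \<pi>) J = Suc (inv_count \<pi> J)"
proof -
  have inj: "inj \<pi>" using assms(2) permutes_inj by blast
  have eq: "invs (sw v \<circ> \<pi>) J = insert (P, Q) (invs \<pi> J)"
  proof (rule set_eqI, clarify)
    fix i j
    show "((i, j) \<in> invs (sw v \<circ> \<pi>) J) = ((i, j) \<in> insert (P, Q) (invs \<pi> J))"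
    proof (cases "(i, j) = (P, Q)")
      case True then show ?thesis using assms by (auto simp: invs_def sw_apply)
    next
      case False
      show ?thesis
      proof (cases "i \<in> J \<and> j \<in> J \<and> i < j")
        case True
        have ne: "\<pi> i \<noteq> \<pi> j" using inj True by (metis less_irrefl injD)
        have n1: "\<not> (\<pi> j = v \<and> \<pi> i = v+1)"
        proof
          assume h: "\<pi> j = v \<and> \<pi> i = v+1"
          then have "\<pi> j = \<pi> P" "\<pi> i = \<pi> Q" using assms by auto
          then have "j = P" "i = Q" using inj by (metis injD)+
          then show False using True assms by simp
        qed
        have n2: "\<not> (\<pi> j = v+1 \<and> \<pi> i = v)"
        proof
          assume h: "\<pi> j = v+1 \<and> \<pi> i = v"
          then have "\<pi> j = \<pi> Q" "\<pi> i = \<pi> P" using assms by auto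
          then have "j = Q" "i = P" using inj by (metis injD)+
          then show False using False by simp
        qed
        have "sw v (\<pi> j) < sw v (\<pi> i) \<longleftrightarrow> \<pi> j < \<pi> i"
          using ne n1 n2 by (intro sw_order) auto
        then show ?thesis using True False by (auto simp: invs_def)
      next
        case False
        then show ?thesis using \<open>(i, j) \<noteq> (P, Q)\<close> by (auto simp: invs_def)
      qed
    qed
  qed
  have "(P, Q) \<notin> invs \<pi> J" using assms by (auto simp: invs_def)
  then show ?thesis using eq finite_invs[OF assms(1)] by (simp add: inv_count_invs)
qed

lemma inv_sw_down:
  assumes "finite J" "\<pi> permutes J" "P \<in> J" "Q \<in> J" "\<pi> P = v+1" "\<pi> Q = v" "P < Q"
  shows "inv_count \<pi> J = Suc (inv_count (sw v \<circ> \<pi>) J)"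
proof -
  have vJ: "v \<in> J" "v+1 \<in> J" using assms permutes_in_image by metis+
  have "inv_count (sw v \<circ> (sw v \<circ> \<pi>)) J = Suc (inv_count (sw v \<circ> \<pi>) J)"
    by (rule inv_sw_up[of J _ P Q]) (use assms vJ sw_permutes in \<open>auto simp: sw_apply\<close>)
  then show ?thesis by simp
qed


definition perms :: "int set \<Rightarrow> (int \<Rightarrow> int) set" where "perms J = {\<pi>. \<pi> permutes J}"

lemma finite_perms: "finite J \<Longrightarrow> finite (perms J)"
  by (simp add: perms_def finite_permutations)

lemma perm_preimage:
  assumes "\<pi> permutes J" "v \<in> J" obtains P where "P \<in> J" "\<pi> P = v"
  using assms permutes_image[OF assms(1)] by (metis imageE)

lemma wt_sw_ge:
  assumes "finite J" "\<pi> permutes J" "v \<in> J" "v+1 \<in> J" "0 \<le> p" "p \<le> (1::real)"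
  shows "p * p ^ inv_count \<pi> J \<le> p ^ inv_count (sw v \<circ> \<pi>) J"
proof -
  obtain P where P: "P \<in> J" "\<pi> P = v" using perm_preimage assms by metis
  obtain Q where Q: "Q \<in> J" "\<pi> Q = v+1" using perm_preimage assms by metis
  have "P \<noteq> Q" using P Q by auto
  then consider "P < Q" | "Q < P" by linarith
  then show ?thesis
  proof cases
    case 1
    then have "inv_count (sw v \<circ> \<pi>) J = Suc (inv_count \<pi> J)"
      using inv_sw_up[OF assms(1,2) P(1) Q(1) P(2) Q(2)] by simp
    then show ?thesis by simp
  next
    case 2
    then have e: "inv_count \<pi> J = Suc (inv_count (sw v \<circ> \<pi>) J)"
      using inv_sw_down[OF assms(1,2) Q(1) P(1) Q(2) P(2)] by simp
    have "p * p \<le> 1" using assms by (simp add: mult_le_one)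
    then have "p * p * p ^ inv_count (sw v \<circ> \<pi>) J \<le> p ^ inv_count (sw v \<circ> \<pi>) J"
      using assms by (simp add: mult_left_le_one_le)
    then show ?thesis using e by (simp add: mult.assoc)
  qed
qed

lemma sum_bij_ge:
  assumes "bij_betw f A B" "\<And>x. x \<in> A \<Longrightarrow> c * g x \<le> g (f x)"
  shows "c * sum g A \<le> (sum g B :: real)"
proof -
  have "c * sum g A = (\<Sum>x\<in>A. c * g x)" by (simp add: sum_distrib_left)
  also have "\<dots> \<le> (\<Sum>x\<in>A. g (f x))" by (intro sum_mono assms)
  also have "\<dots> = sum g B" using sum.reindex_bij_betw[OF assms(1)] by simp
  finally show ?thesis .
qed

lemma bij_sw:
  assumes "i \<in> J" "v \<in> J" "v+1 \<in> J"
  shows "bij_betw (\<lambda>\<pi>. sw v \<circ> \<pi>) {\<pi>\<in>perms J. \<pi> i = v} {\<pi>\<in>perms J. \<pi> i = v+1}"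
        "bij_betw (\<lambda>\<pi>. sw v \<circ> \<pi>) {\<pi>\<in>perms J. \<pi> i = v+1} {\<pi>\<in>perms J. \<pi> i = v}"
proof -
  show "bij_betw (\<lambda>\<pi>. sw v \<circ> \<pi>) {\<pi>\<in>perms J. \<pi> i = v} {\<pi>\<in>perms J. \<pi> i = v+1}"
    by (rule bij_betwI[where g="\<lambda>\<pi>. sw v \<circ> \<pi>"])
       (use assms in \<open>auto simp: perms_def sw_permutes sw_apply\<close>)
  show "bij_betw (\<lambda>\<pi>. sw v \<circ> \<pi>) {\<pi>\<in>perms J. \<pi> i = v+1} {\<pi>\<in>perms J. \<pi> i = v}"
    by (rule bij_betwI[where g="\<lambda>\<pi>. sw v \<circ> \<pi>"])
       (use assms in \<open>auto simp: perms_def sw_permutes sw_apply\<close>)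
qed

lemma ratio_finite:
  assumes "finite J" "i \<in> J" "v \<in> J" "v+1 \<in> J" "0 \<le> p" "p \<le> (1::real)"
  shows "p * (\<Sum>\<pi>\<in>{\<pi>\<in>perms J. \<pi> i = v}. p ^ inv_count \<pi> J) \<le> (\<Sum>\<pi>\<in>{\<pi>\<in>perms J. \<pi> i = v+1}. p ^ inv_count \<pi> J)"
        "p * (\<Sum>\<pi>\<in>{\<pi>\<in>perms J. \<pi> i = v+1}. p ^ inv_count \<pi> J) \<le> (\<Sum>\<pi>\<in>{\<pi>\<in>perms J. \<pi> i = v}. p ^ inv_count \<pi> J)"
proof -
  show "p * (\<Sum>\<pi>\<in>{\<pi>\<in>perms J. \<pi> i = v}. p ^ inv_count \<pi> J) \<le> (\<Sum>\<pi>\<in>{\<pi>\<in>perms J. \<pi> i = v+1}. p ^ inv_count \<pi> J)"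
    by (rule sum_bij_ge[OF bij_sw(1)[OF assms(2-4)]], rule wt_sw_ge, use assms in \<open>auto simp: perms_def\<close>)
  show "p * (\<Sum>\<pi>\<in>{\<pi>\<in>perms J. \<pi> i = v+1}. p ^ inv_count \<pi> J) \<le> (\<Sum>\<pi>\<in>{\<pi>\<in>perms J. \<pi> i = v}. p ^ inv_count \<pi> J)"
    by (rule sum_bij_ge[OF bij_sw(2)[OF assms(2-4)]], rule wt_sw_ge, use assms in \<open>auto simp: perms_def\<close>)
qed

lemma sum_inj_le:
  assumes "inj_on f A" "f ` A \<subseteq> B" "finite B" "\<And>x. x \<in> A \<Longrightarrow> g x = c * g (f x)" "c \<ge> 0"
    "\<And>x. x \<in> B \<Longrightarrow> g x \<ge> 0"
  shows "sum g A \<le> c * (sum g B :: real)"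
proof -
  have "sum g A = (\<Sum>x\<in>A. c * g (f x))" by (intro sum.cong assms) auto
  also have "\<dots> = c * (\<Sum>x\<in>A. g (f x))" by (simp add: sum_distrib_left)
  also have "(\<Sum>x\<in>A. g (f x)) = sum g (f ` A)" by (simp add: sum.reindex[OF assms(1)])
  also have "sum g (f ` A) \<le> sum g B" by (intro sum_mono2 assms) auto
  finally show ?thesis using assms(5) by (simp add: mult_left_mono)
qed

lemma tail_left:
  assumes "a \<le> b" "0 \<le> p" "p \<le> (1::real)"
  shows "(\<Sum>\<pi>\<in>{\<pi>\<in>perms {a..b}. \<pi> a \<ge> a + int m}. p ^ inv_count \<pi> {a..b})
         \<le> p ^ m * (\<Sum>\<pi>\<in>perms {a..b}. p ^ inv_count \<pi> {a..b})"
proof (induction m)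
  case 0
  have "(\<Sum>\<pi>\<in>{\<pi>\<in>perms {a..b}. P \<pi>}. p ^ inv_count \<pi> {a..b}) \<le> (\<Sum>\<pi>\<in>perms {a..b}. p ^ inv_count \<pi> {a..b})" for P
    by (rule sum_mono2) (auto simp: finite_perms assms(2))
  then show ?case by simp
next
  case (Suc m)
  let ?J = "{a..b}"
  let ?A = "{\<pi>\<in>perms ?J. \<pi> a \<ge> a + int (Suc m)}"
  let ?B = "{\<pi>\<in>perms ?J. \<pi> a \<ge> a + int m}"
  let ?f = "\<lambda>\<pi>. sw (\<pi> a - 1) \<circ> \<pi>"
  have aJ: "a \<in> ?J" using assms by simp
  have key: "\<pi> \<in> ?A \<Longrightarrow> ?f \<pi> \<in> ?B \<and> p ^ inv_count \<pi> ?J = p * p ^ inv_count (?f \<pi>) ?J" for \<pi>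
  proof -
    assume A: "\<pi> \<in> ?A"
    then have pm: "\<pi> permutes ?J" by (simp add: perms_def)
    have pa: "\<pi> a \<in> ?J" using permutes_in_image[OF pm] aJ by simp
    define v where "v = \<pi> a - 1"
    have le: "\<pi> a \<ge> a + int (Suc m)" using A by simp
    have vJ: "v \<in> ?J" "v+1 \<in> ?J" using le pa by (simp_all add: v_def)
    obtain Q where Q: "Q \<in> ?J" "\<pi> Q = v" using perm_preimage pm vJ by metis
    have "Q \<noteq> a" using Q v_def by auto
    then have "a < Q" using Q by auto
    then have e: "inv_count \<pi> ?J = Suc (inv_count (sw v \<circ> \<pi>) ?J)"
      by (intro inv_sw_down[OF _ pm aJ Q(1) _ Q(2)]) (auto simp: v_def)
    have fa: "?f \<pi> a = v" by (simp add: sw_apply v_def)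
    have fp: "?f \<pi> permutes ?J" using sw_permutes[OF vJ pm] by (simp add: v_def)
    have "\<pi> a \<ge> a + int (Suc m)" using A by simp
    then have "v \<ge> a + int m" by (simp add: v_def)
    then have "?f \<pi> \<in> ?B" using fa fp by (simp add: perms_def)
    then show ?thesis using e by (simp add: v_def)
  qed
  have inj: "inj_on ?f ?A"
  proof (rule inj_onI)
    fix x y assume x: "x \<in> ?A" and y: "y \<in> ?A" and e: "?f x = ?f y"
    have "(?f x) a = x a - 1 + 1 - 1 + (if True then 0 else 0)" by (simp add: sw_apply)
    have xa: "?f x a = x a - 1" by (simp add: sw_apply)
    have ya: "?f y a = y a - 1" by (simp add: sw_apply)
    have "x a = y a" using e xa ya by (metis diff_add_cancel)
    then have "sw (x a - 1) \<circ> (?f x) = sw (x a - 1) \<circ> (?f y)" using e by simp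
    then show "x = y" using \<open>x a = y a\<close> by simp
  qed
  have "sum (\<lambda>\<pi>. p ^ inv_count \<pi> ?J) ?A \<le> p * sum (\<lambda>\<pi>. p ^ inv_count \<pi> ?J) ?B"
    proof (rule sum_inj_le[OF inj])
    show "?f ` ?A \<subseteq> ?B" using key by blast
    show "\<And>x. x \<in> ?A \<Longrightarrow> p ^ inv_count x ?J = p * p ^ inv_count (?f x) ?J" using key by blast
    show "\<And>x. x \<in> ?B \<Longrightarrow> 0 \<le> p ^ inv_count x ?J" by (rule zero_le_power[OF assms(2)])
  qed (use assms(2) in \<open>simp_all add: finite_perms\<close>)
  also have "\<dots> \<le> p * (p ^ m * (\<Sum>\<pi>\<in>perms ?J. p ^ inv_count \<pi> ?J))"
    using Suc.IH assms by (intro mult_left_mono) auto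
  finally show ?case by (simp add: mult.assoc)
qed

lemma tail_right:
  assumes "a \<le> b" "0 \<le> p" "p \<le> (1::real)"
  shows "(\<Sum>\<pi>\<in>{\<pi>\<in>perms {a..b}. \<pi> b \<le> b - int m}. p ^ inv_count \<pi> {a..b})
         \<le> p ^ m * (\<Sum>\<pi>\<in>perms {a..b}. p ^ inv_count \<pi> {a..b})"
proof (induction m)
  case 0
  have "(\<Sum>\<pi>\<in>{\<pi>\<in>perms {a..b}. P \<pi>}. p ^ inv_count \<pi> {a..b}) \<le> (\<Sum>\<pi>\<in>perms {a..b}. p ^ inv_count \<pi> {a..b})" for P
    by (rule sum_mono2) (auto simp: finite_perms assms(2))
  then show ?case by simp
next
  case (Suc m)
  let ?J = "{a..b}"
  let ?A = "{\<pi>\<in>perms ?J. \<pi> b \<le> b - int (Suc m)}"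
  let ?B = "{\<pi>\<in>perms ?J. \<pi> b \<le> b - int m}"
  let ?f = "\<lambda>\<pi>. sw (\<pi> b) \<circ> \<pi>"
  have bJ: "b \<in> ?J" using assms by simp
  have key: "\<pi> \<in> ?A \<Longrightarrow> ?f \<pi> \<in> ?B \<and> p ^ inv_count \<pi> ?J = p * p ^ inv_count (?f \<pi>) ?J" for \<pi>
  proof -
    assume A: "\<pi> \<in> ?A"
    then have pm: "\<pi> permutes ?J" by (simp add: perms_def)
    have pb: "\<pi> b \<in> ?J" using permutes_in_image[OF pm] bJ by simp
    define v where "v = \<pi> b"
    have le: "\<pi> b \<le> b - int (Suc m)" using A by simp
    have vJ: "v \<in> ?J" "v+1 \<in> ?J" using le pb by (simp_all add: v_def)
    obtain Q where Q: "Q \<in> ?J" "\<pi> Q = v+1" using perm_preimage pm vJ by metis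
    have "Q \<noteq> b" using Q v_def by auto
    then have "Q < b" using Q by auto
    then have e: "inv_count \<pi> ?J = Suc (inv_count (sw v \<circ> \<pi>) ?J)"
      by (intro inv_sw_down[OF _ pm Q(1) bJ Q(2)]) (auto simp: v_def)
    have fb: "?f \<pi> b = v + 1" by (simp add: sw_apply v_def)
    have fp: "?f \<pi> permutes ?J" using sw_permutes[OF vJ pm] by (simp add: v_def)
    have "\<pi> b \<le> b - int (Suc m)" using A by simp
    then have "v + 1 \<le> b - int m" by (simp add: v_def)
    then have "?f \<pi> \<in> ?B" using fb fp by (simp add: perms_def)
    then show ?thesis using e by (simp add: v_def)
  qed
  have inj: "inj_on ?f ?A"
  proof (rule inj_onI)
    fix x y assume x: "x \<in> ?A" and y: "y \<in> ?A" and e: "?f x = ?f y"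
    have xa: "?f x b = x b + 1" by (simp add: sw_apply)
    have ya: "?f y b = y b + 1" by (simp add: sw_apply)
    have "x b = y b" using e xa ya by (metis add_right_cancel)
    then have "sw (x b) \<circ> (?f x) = sw (x b) \<circ> (?f y)" using e by simp
    then show "x = y" using \<open>x b = y b\<close> by simp
  qed
  have "sum (\<lambda>\<pi>. p ^ inv_count \<pi> ?J) ?A \<le> p * sum (\<lambda>\<pi>. p ^ inv_count \<pi> ?J) ?B"
    proof (rule sum_inj_le[OF inj])
    show "?f ` ?A \<subseteq> ?B" using key by blast
    show "\<And>x. x \<in> ?A \<Longrightarrow> p ^ inv_count x ?J = p * p ^ inv_count (?f x) ?J" using key by blast
    show "\<And>x. x \<in> ?B \<Longrightarrow> 0 \<le> p ^ inv_count x ?J" by (rule zero_le_power[OF assms(2)])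
  qed (use assms(2) in \<open>simp_all add: finite_perms\<close>)
  also have "\<dots> \<le> p * (p ^ m * (\<Sum>\<pi>\<in>perms ?J. p ^ inv_count \<pi> ?J))"
    using Suc.IH assms by (intro mult_left_mono) auto
  finally show ?case by (simp add: mult.assoc)
qed


lemma card_less_interval:
  fixes \<sigma> :: "int \<Rightarrow> int"
  assumes "x \<in> {a..b::int}"
  shows "a + int (card {y\<in>{a..b}. \<sigma> y < \<sigma> x}) \<le> b"
proof -
  have "{y\<in>{a..b}. \<sigma> y < \<sigma> x} \<subseteq> {a..b} - {x}" by auto
  then have "card {y\<in>{a..b}. \<sigma> y < \<sigma> x} \<le> card ({a..b} - {x})" by (intro card_mono) auto
  also have "\<dots> = nat (b - a + 1) - 1" using assms by simp
  finally show ?thesis using assms by auto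
qed

lemma pattern_interval:
  fixes \<sigma> :: "int \<Rightarrow> int"
  assumes "x \<in> {a..b::int}"
  shows "pattern \<sigma> {a..b} x = a + int (card {y\<in>{a..b}. \<sigma> y < \<sigma> x})"
  using assms card_less_interval[OF assms, of \<sigma>] by (simp add: pattern_def)

lemma pattern_out: "x \<notin> A \<Longrightarrow> pattern \<sigma> A x = x"
  by (simp add: pattern_def)

lemma pattern_mono:
  fixes \<sigma> :: "int \<Rightarrow> int"
  assumes "inj \<sigma>" "x \<in> {a..b::int}" "y \<in> {a..b}" "\<sigma> y < \<sigma> x"
  shows "pattern \<sigma> {a..b} y < pattern \<sigma> {a..b} x"
proof -
  have sub: "{z\<in>{a..b}. \<sigma> z < \<sigma> y} \<subseteq> {z\<in>{a..b}. \<sigma> z < \<sigma> x}"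
    using assms(4) by auto
  have "y \<in> {z\<in>{a..b}. \<sigma> z < \<sigma> x}" "y \<notin> {z\<in>{a..b}. \<sigma> z < \<sigma> y}" using assms(3,4) by auto
  then have "{z\<in>{a..b}. \<sigma> z < \<sigma> y} \<subset> {z\<in>{a..b}. \<sigma> z < \<sigma> x}" using sub by blast
  then have "card {z\<in>{a..b}. \<sigma> z < \<sigma> y} < card {z\<in>{a..b}. \<sigma> z < \<sigma> x}"
    by (rule psubset_card_mono[rotated]) (rule finite_subset[of _ "{a..b}"], auto)
  then show ?thesis using pattern_interval[OF assms(2), of \<sigma>] pattern_interval[OF assms(3), of \<sigma>] by linarith
qed

lemma pattern_less_iff:
  fixes \<sigma> :: "int \<Rightarrow> int"
  assumes "inj \<sigma>" "x \<in> {a..b::int}" "y \<in> {a..b}"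
  shows "pattern \<sigma> {a..b} y < pattern \<sigma> {a..b} x \<longleftrightarrow> \<sigma> y < \<sigma> x"
proof
  assume h: "pattern \<sigma> {a..b} y < pattern \<sigma> {a..b} x"
  show "\<sigma> y < \<sigma> x"
  proof (rule ccontr)
    assume "\<not> \<sigma> y < \<sigma> x"
    then consider "\<sigma> y = \<sigma> x" | "\<sigma> x < \<sigma> y" by linarith
    then show False
    proof cases
      case 1 then have "x = y" using assms(1) by (metis injD)
      then show False using h by simp
    next
      case 2 then show False using pattern_mono[OF assms(1,3,2) 2] h by simp
    qed
  qed
qed (rule pattern_mono[OF assms])

lemma pattern_permutes:
  fixes \<sigma> :: "int \<Rightarrow> int"
  assumes "inj \<sigma>"
  shows "pattern \<sigma> {a..b::int} permutes {a..b}"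
proof (rule inj_imp_permutes)
  show "inj_on (pattern \<sigma> {a..b}) {a..b}"
  proof (rule inj_onI)
    fix x y assume x: "x \<in> {a..b}" and y: "y \<in> {a..b}" and e: "pattern \<sigma> {a..b} x = pattern \<sigma> {a..b} y"
    show "x = y"
    proof (rule ccontr)
      assume "x \<noteq> y"
      then have "\<sigma> x \<noteq> \<sigma> y" using assms by (metis injD)
      then consider "\<sigma> x < \<sigma> y" | "\<sigma> y < \<sigma> x" by linarith
      then show False
        using pattern_mono[OF assms x y] pattern_mono[OF assms y x] e by (cases) auto
    qed
  qed
  show "x \<in> {a..b} \<Longrightarrow> pattern \<sigma> {a..b} x \<in> {a..b}" for x
    using card_less_interval[of x a b \<sigma>] by (simp add: pattern_interval)
qed (auto simp: pattern_out)

lemma pattern_extend: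
  fixes \<sigma> :: "int \<Rightarrow> int"
  assumes "x \<in> {a..b::int}" "a' \<le> a" "b \<le> b'"
    "\<And>y. y \<in> {a'..<a} \<Longrightarrow> \<sigma> y < \<sigma> x" "\<And>y. y \<in> {b<..b'} \<Longrightarrow> \<sigma> x < \<sigma> y"
  shows "pattern \<sigma> {a'..b'} x = pattern \<sigma> {a..b} x"
proof -
  have xx: "x \<in> {a'..b'}" using assms by auto
  have eq: "{y\<in>{a'..b'}. \<sigma> y < \<sigma> x} = {y\<in>{a..b}. \<sigma> y < \<sigma> x} \<union> {a'..<a}"
  proof (rule set_eqI)
    fix y show "y \<in> {y\<in>{a'..b'}. \<sigma> y < \<sigma> x} \<longleftrightarrow> y \<in> {y\<in>{a..b}. \<sigma> y < \<sigma> x} \<union> {a'..<a}"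
      using assms(1,2,3) assms(4)[of y] assms(5)[of y] by (cases "y < a"; cases "b < y") auto
  qed
  have "card ({y\<in>{a..b}. \<sigma> y < \<sigma> x} \<union> {a'..<a}) = card {y\<in>{a..b}. \<sigma> y < \<sigma> x} + card {a'..<a}"
    by (rule card_Un_disjoint) (auto intro: finite_subset[of _ "{a..b}"])
  then have c: "card {y\<in>{a'..b'}. \<sigma> y < \<sigma> x} = card {y\<in>{a..b}. \<sigma> y < \<sigma> x} + nat (a - a')"
    using arg_cong[of _ _ card, OF eq] by simp
  have "pattern \<sigma> {a'..b'} x = a' + int (card {y\<in>{a'..b'}. \<sigma> y < \<sigma> x})"
    by (rule pattern_interval[OF xx])
  also have "\<dots> = a + int (card {y\<in>{a..b}. \<sigma> y < \<sigma> x})"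
    using c assms(2) by simp
  also have "\<dots> = pattern \<sigma> {a..b} x"
    by (rule pattern_interval[OF assms(1), symmetric])
  finally show ?thesis .
qed


definition shf :: "int \<Rightarrow> (int \<Rightarrow> int) \<Rightarrow> int \<Rightarrow> int" where
  "shf k \<pi> = (\<lambda>z. \<pi> (z - k) + k)"

lemma shf_permutes:
  assumes "\<pi> permutes {a..b}"
  shows "shf k \<pi> permutes {a+k..b+k}"
proof (rule inj_imp_permutes)
  have inj: "inj \<pi>" using assms permutes_inj by blast
  show "inj_on (shf k \<pi>) {a+k..b+k}"
    by (rule inj_onI) (simp add: shf_def, metis inj injD diff_add_cancel)
  show "x \<in> {a+k..b+k} \<Longrightarrow> shf k \<pi> x \<in> {a+k..b+k}" for x
    using permutes_in_image[OF assms, of "x - k"] by (auto simp: shf_def)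
  show "x \<notin> {a+k..b+k} \<Longrightarrow> shf k \<pi> x = x" for x
    using permutes_not_in[OF assms, of "x - k"] by (auto simp: shf_def)
qed simp

lemma shf_shf[simp]: "shf (-k) (shf k \<pi>) = \<pi>"
  by (simp add: shf_def fun_eq_iff)

lemma inv_count_shf: "inv_count (shf k \<pi>) {a+k..b+k} = inv_count \<pi> {a..b}"
proof -
  have "invs (shf k \<pi>) {a+k..b+k} = (\<lambda>(i,j). (i+k, j+k)) ` invs \<pi> {a..b}"
  proof (rule set_eqI)
    fix z :: "int \<times> int"
    obtain i j where z: "z = (i, j)" by fastforce
    have "(i, j) \<in> invs (shf k \<pi>) {a+k..b+k} \<longleftrightarrow> (i - k, j - k) \<in> invs \<pi> {a..b}"
      by (auto simp: invs_def shf_def)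
    also have "\<dots> \<longleftrightarrow> (i, j) \<in> (\<lambda>(i,j). (i+k, j+k)) ` invs \<pi> {a..b}"
    proof
      assume "(i - k, j - k) \<in> invs \<pi> {a..b}"
      then show "(i, j) \<in> (\<lambda>(i,j). (i+k, j+k)) ` invs \<pi> {a..b}"
        by (intro image_eqI[where x="(i-k, j-k)"]) auto
    qed auto
    finally show "z \<in> invs (shf k \<pi>) {a+k..b+k} \<longleftrightarrow> z \<in> (\<lambda>(i,j). (i+k, j+k)) ` invs \<pi> {a..b}"
      using z by simp
  qed
  moreover have "inj_on (\<lambda>(i::int,j::int). (i+k, j+k)) (invs \<pi> {a..b})"
    by (auto simp: inj_on_def)
  ultimately show ?thesis by (simp add: inv_count_invs card_image)
qed

lemma bij_shf: "bij_betw (shf k) (perms {a..b}) (perms {a+k..b+k})"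
proof (rule bij_betwI[where g="shf (-k)"])
  show "shf k \<in> perms {a..b} \<rightarrow> perms {a+k..b+k}" by (auto simp: perms_def intro: shf_permutes)
  show "shf (-k) \<in> perms {a+k..b+k} \<rightarrow> perms {a..b}"
    using shf_permutes[of _ "a+k" "b+k" "-k"] by (auto simp: perms_def)
  show "\<And>x. shf (-k) (shf k x) = x" by simp
  show "\<And>y. shf k (shf (-k) y) = y" using shf_shf[of "-k"] by simp
qed

lemma Z_shf: "(\<Sum>\<tau>\<in>perms {a+k..b+k}. p ^ inv_count \<tau> {a+k..b+k}) = (\<Sum>\<tau>\<in>perms {a..b}. p ^ inv_count \<tau> {a..b})"
  using sum.reindex_bij_betw[OF bij_shf[of k a b], of "\<lambda>\<tau>. p ^ inv_count \<tau> {a+k..b+k}"]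
  by (simp add: inv_count_shf)

lemma mw_shf: "\<pi> permutes {a..b} \<Longrightarrow> mallows_weight p {a+k..b+k} (shf k \<pi>) = mallows_weight p {a..b} \<pi>"
  using Z_shf[of p a k b] by (simp add: mallows_weight_def inv_count_shf perms_def)

lemma F_shift:
  "(\<Sum>\<pi>\<in>{\<pi>\<in>perms {a..b}. \<pi> x = y}. mallows_weight p {a..b} \<pi>)
   = (\<Sum>\<pi>\<in>{\<pi>\<in>perms {a+k..b+k}. \<pi> (x+k) = y+k}. mallows_weight p {a+k..b+k} \<pi>)"
proof -
  have b: "bij_betw (shf k) {\<pi>\<in>perms {a..b}. \<pi> x = y} {\<pi>\<in>perms {a+k..b+k}. \<pi> (x+k) = y+k}"
  proof (rule bij_betwI[where g="shf (-k)"])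
    show "shf k \<in> {\<pi>\<in>perms {a..b}. \<pi> x = y} \<rightarrow> {\<pi>\<in>perms {a+k..b+k}. \<pi> (x+k) = y+k}"
      by (auto simp: perms_def shf_def intro: shf_permutes[unfolded shf_def])
    show "shf (-k) \<in> {\<pi>\<in>perms {a+k..b+k}. \<pi> (x+k) = y+k} \<rightarrow> {\<pi>\<in>perms {a..b}. \<pi> x = y}"
      using shf_permutes[of _ "a+k" "b+k" "-k"] by (auto simp: perms_def shf_def)
    show "\<And>z. shf (-k) (shf k z) = z" by simp
    show "\<And>z. shf k (shf (-k) z) = z" using shf_shf[of "-k"] by simp
  qed
  show ?thesis
    using sum.reindex_bij_betw[OF b, of "mallows_weight p {a+k..b+k}"]
    by (auto simp: mw_shf perms_def intro!: sum.cong)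
qed


lemma Z_pos:
  assumes "0 < (p::real)" "finite J"
  shows "0 < (\<Sum>\<tau>\<in>perms J. p ^ inv_count \<tau> J)"
  by (rule sum_pos2[where i=id]) (use assms finite_perms[of J] in \<open>auto simp: perms_def\<close>)

lemma sum_mw: "(\<Sum>\<pi>\<in>S. mallows_weight p J \<pi>) = (\<Sum>\<pi>\<in>S. p ^ inv_count \<pi> J) / (\<Sum>\<tau>\<in>perms J. p ^ inv_count \<tau> J)"
  by (simp add: mallows_weight_def perms_def sum_divide_distrib)

locale mz =
  fixes M :: "'w measure" and Sig :: "'w \<Rightarrow> int \<Rightarrow> int" and p :: real
  assumes MZ: "mallows_Z M Sig p" and p0: "0 < p" and p1: "p < 1"
begin

lemma PS: "prob_space M" using MZ by (simp add: mallows_Z_def)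

sublocale P: prob_space M by (rule PS)

lemma inj_Sig: "w \<in> space M \<Longrightarrow> inj (Sig w)"
  using MZ by (auto simp: mallows_Z_def bij_is_inj)

lemma ev_facts:
  assumes "\<pi> permutes {a..b}"
  shows "{w \<in> space M. pattern (Sig w) {a..b} = \<pi>} \<in> sets M"
    "measure M {w \<in> space M. pattern (Sig w) {a..b} = \<pi>} = mallows_weight p {a..b} \<pi>"
proof -
  have "\<forall>a b :: int. \<forall>\<pi>. \<pi> permutes {a..b} \<longrightarrow>
        {w \<in> space M. pattern (Sig w) {a..b} = \<pi>} \<in> sets M \<and>
        measure M {w \<in> space M. pattern (Sig w) {a..b} = \<pi>} = mallows_weight p {a..b} \<pi>"
    using MZ unfolding mallows_Z_def by blast
  then show "{w \<in> space M. pattern (Sig w) {a..b} = \<pi>} \<in> sets M"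
    "measure M {w \<in> space M. pattern (Sig w) {a..b} = \<pi>} = mallows_weight p {a..b} \<pi>"
    using assms by blast+
qed

lemma patS:
  assumes "S \<subseteq> perms {a..b}"
  shows "{w\<in>space M. pattern (Sig w) {a..b} \<in> S} \<in> sets M"
    "measure M {w\<in>space M. pattern (Sig w) {a..b} \<in> S} = (\<Sum>\<pi>\<in>S. mallows_weight p {a..b} \<pi>)"
proof -
  have fin: "finite S" using assms finite_perms[of "{a..b}"] finite_subset by auto
  have eq: "{w\<in>space M. pattern (Sig w) {a..b} \<in> S} = (\<Union>\<pi>\<in>S. {w\<in>space M. pattern (Sig w) {a..b} = \<pi>})"
    by auto
  have sub: "(\<lambda>\<pi>. {w\<in>space M. pattern (Sig w) {a..b} = \<pi>}) ` S \<subseteq> sets M"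
    using assms ev_facts(1) by (auto simp: perms_def)
  show "{w\<in>space M. pattern (Sig w) {a..b} \<in> S} \<in> sets M"
    unfolding eq using fin sub by (intro sets.finite_UN) auto
  have "measure M (\<Union>\<pi>\<in>S. {w\<in>space M. pattern (Sig w) {a..b} = \<pi>})
      = (\<Sum>\<pi>\<in>S. measure M {w\<in>space M. pattern (Sig w) {a..b} = \<pi>})"
    by (rule P.finite_measure_finite_Union[OF fin sub]) (auto simp: disjoint_family_on_def)
  also have "\<dots> = (\<Sum>\<pi>\<in>S. mallows_weight p {a..b} \<pi>)"
    using assms by (intro sum.cong) (auto simp: ev_facts(2) perms_def)
  finally show "measure M {w\<in>space M. pattern (Sig w) {a..b} \<in> S} = (\<Sum>\<pi>\<in>S. mallows_weight p {a..b} \<pi>)"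
    unfolding eq .
qed

lemma pat_eq_set:
  "{w\<in>space M. P (pattern (Sig w) {a..b})} = {w\<in>space M. pattern (Sig w) {a..b} \<in> {\<pi>\<in>perms {a..b}. P \<pi>}}"
  using pattern_permutes[OF inj_Sig] by (auto simp: perms_def)

lemma P_val:
  shows "{w\<in>space M. pattern (Sig w) {a..b} i = j} \<in> sets M"
        "measure M {w\<in>space M. pattern (Sig w) {a..b} i = j} = (\<Sum>\<pi>\<in>{\<pi>\<in>perms {a..b}. \<pi> i = j}. mallows_weight p {a..b} \<pi>)"
  using patS[of "{\<pi>\<in>perms {a..b}. \<pi> i = j}" a b] pat_eq_set[of "\<lambda>\<pi>. \<pi> i = j" a b] by auto

lemma tailL_P: "a \<le> b \<Longrightarrow> (\<Sum>\<pi>\<in>{\<pi>\<in>perms {a..b}. \<pi> a \<ge> a + int m}. mallows_weight p {a..b} \<pi>) \<le> p ^ m"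
  using tail_left[of a b p m] Z_pos[OF p0, of "{a..b}"] p0 p1 by (simp add: sum_mw pos_divide_le_eq)

lemma tailR_P: "a \<le> b \<Longrightarrow> (\<Sum>\<pi>\<in>{\<pi>\<in>perms {a..b}. \<pi> b \<le> b - int m}. mallows_weight p {a..b} \<pi>) \<le> p ^ m"
  using tail_right[of a b p m] Z_pos[OF p0, of "{a..b}"] p0 p1 by (simp add: sum_mw pos_divide_le_eq)

lemma G_bound:
  assumes "a < b"
  shows "{w\<in>space M. Sig w b < Sig w a} \<in> sets M"
    "measure M {w\<in>space M. Sig w b < Sig w a} \<le> 2 * p ^ nat ((b - a) div 2)"
proof -
  define m where "m = nat ((b-a) div 2)"
  have "0 \<le> (b-a) div 2" using assms by simp
  then have im: "int m = (b-a) div 2" by (simp add: m_def)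
  have m2: "2 * int m \<le> b - a" unfolding im by presburger
  let ?J = "{a..b}"
  have eq: "{w\<in>space M. Sig w b < Sig w a} = {w\<in>space M. pattern (Sig w) ?J \<in> {\<pi>\<in>perms ?J. \<pi> b < \<pi> a}}"
  proof -
    have "{w\<in>space M. Sig w b < Sig w a} = {w\<in>space M. pattern (Sig w) ?J b < pattern (Sig w) ?J a}"
      using pattern_less_iff[OF inj_Sig, of _ a a b b] assms by auto
    then show ?thesis using pat_eq_set[of "\<lambda>\<pi>. \<pi> b < \<pi> a" a b] by simp
  qed
  let ?S = "{\<pi>\<in>perms ?J. \<pi> b < \<pi> a}"
  let ?S1 = "{\<pi>\<in>perms ?J. \<pi> a \<ge> a + int m}"
  let ?S2 = "{\<pi>\<in>perms ?J. \<pi> b \<le> b - int m}"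
  have sub: "?S \<subseteq> ?S1 \<union> ?S2" using m2 by auto
  show "{w\<in>space M. Sig w b < Sig w a} \<in> sets M" unfolding eq by (rule patS) auto
  have s1: "{w\<in>space M. pattern (Sig w) ?J \<in> ?S1} \<in> sets M" by (rule patS) auto
  have s2: "{w\<in>space M. pattern (Sig w) ?J \<in> ?S2} \<in> sets M" by (rule patS) auto
  have "measure M {w\<in>space M. Sig w b < Sig w a}
      \<le> measure M ({w\<in>space M. pattern (Sig w) ?J \<in> ?S1} \<union> {w\<in>space M. pattern (Sig w) ?J \<in> ?S2})"
    unfolding eq using sub s1 s2 by (intro P.finite_measure_mono) auto
  also have "\<dots> \<le> measure M {w\<in>space M. pattern (Sig w) ?J \<in> ?S1} + measure M {w\<in>space M. pattern (Sig w) ?J \<in> ?S2}"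
    by (rule measure_Un_le[OF s1 s2])
  also have "\<dots> \<le> p ^ m + p ^ m"
    using patS(2)[of ?S1 a b] patS(2)[of ?S2 a b] tailL_P[of a b m] tailR_P[of a b m] assms
    by (intro add_mono) auto
  finally show "measure M {w\<in>space M. Sig w b < Sig w a} \<le> 2 * p ^ nat ((b - a) div 2)"
    by (simp add: m_def)
qed

end


context mz begin

definition Bset :: "int \<Rightarrow> int \<Rightarrow> int \<Rightarrow> int \<Rightarrow> int \<Rightarrow> 'w set" where
  "Bset x a b a' b' = (\<Union>y\<in>{a'..<a}. {w\<in>space M. Sig w x < Sig w y}) \<union> (\<Union>y\<in>{b<..b'}. {w\<in>space M. Sig w y < Sig w x})"

lemma pow_div_mono:
  assumes "D \<le> d"
  shows "p ^ nat (d div 2) \<le> p ^ nat (D div 2)"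
proof (rule power_decreasing)
  show "nat (D div 2) \<le> nat (d div 2)" using assms by (intro nat_mono zdiv_mono1) auto
qed (use p0 p1 in auto)

lemma Bset_facts:
  assumes "a' \<le> a" "a \<le> x" "x \<le> b" "b \<le> b'" "D \<le> x - a + 1" "D \<le> b + 1 - x"
  shows "Bset x a b a' b' \<in> sets M"
    "measure M (Bset x a b a' b') \<le> 2 * real (nat (a - a') + nat (b' - b)) * p ^ nat (D div 2)"
    "\<And>w. w \<in> space M \<Longrightarrow> w \<notin> Bset x a b a' b' \<Longrightarrow> pattern (Sig w) {a'..b'} x = pattern (Sig w) {a..b} x"
proof -
  let ?L = "\<Union>y\<in>{a'..<a}. {w\<in>space M. Sig w x < Sig w y}"
  let ?R = "\<Union>y\<in>{b<..b'}. {w\<in>space M. Sig w y < Sig w x}"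
  have Ls: "\<And>y. y \<in> {a'..<a} \<Longrightarrow> {w\<in>space M. Sig w x < Sig w y} \<in> sets M"
    using G_bound(1) assms by auto
  have Rs: "\<And>y. y \<in> {b<..b'} \<Longrightarrow> {w\<in>space M. Sig w y < Sig w x} \<in> sets M"
    using G_bound(1) assms by auto
  have Lset: "?L \<in> sets M" using Ls by (intro sets.finite_UN) auto
  have Rset: "?R \<in> sets M" using Rs by (intro sets.finite_UN) auto
  show "Bset x a b a' b' \<in> sets M" unfolding Bset_def using Lset Rset by auto
  have "measure M ?L \<le> (\<Sum>y\<in>{a'..<a}. measure M {w\<in>space M. Sig w x < Sig w y})"
    using Ls by (intro P.finite_measure_subadditive_finite) auto
  also have "\<dots> \<le> of_nat (card {a'..<a}) * (2 * p ^ nat (D div 2))"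
  proof (rule sum_bounded_above)
    fix y assume y: "y \<in> {a'..<a}"
    then have "measure M {w\<in>space M. Sig w x < Sig w y} \<le> 2 * p ^ nat ((x - y) div 2)"
      using G_bound(2)[of y x] assms by auto
    also have "\<dots> \<le> 2 * p ^ nat (D div 2)" using pow_div_mono[of D "x - y"] y assms by auto
    finally show "measure M {w\<in>space M. Sig w x < Sig w y} \<le> 2 * p ^ nat (D div 2)" .
  qed
  finally have L: "measure M ?L \<le> real (nat (a - a')) * (2 * p ^ nat (D div 2))" by simp
  have "measure M ?R \<le> (\<Sum>y\<in>{b<..b'}. measure M {w\<in>space M. Sig w y < Sig w x})"
    using Rs by (intro P.finite_measure_subadditive_finite) auto
  also have "\<dots> \<le> of_nat (card {b<..b'}) * (2 * p ^ nat (D div 2))"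
  proof (rule sum_bounded_above)
    fix y assume y: "y \<in> {b<..b'}"
    then have "measure M {w\<in>space M. Sig w y < Sig w x} \<le> 2 * p ^ nat ((y - x) div 2)"
      using G_bound(2)[of x y] assms by auto
    also have "\<dots> \<le> 2 * p ^ nat (D div 2)" using pow_div_mono[of D "y - x"] y assms by auto
    finally show "measure M {w\<in>space M. Sig w y < Sig w x} \<le> 2 * p ^ nat (D div 2)" .
  qed
  finally have R: "measure M ?R \<le> real (nat (b' - b)) * (2 * p ^ nat (D div 2))" by simp
  have "measure M (Bset x a b a' b') \<le> measure M ?L + measure M ?R"
    unfolding Bset_def by (rule measure_Un_le[OF Lset Rset])
  also have "\<dots> \<le> real (nat (a - a')) * (2 * p ^ nat (D div 2)) + real (nat (b' - b)) * (2 * p ^ nat (D div 2))"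
    using L R by linarith
  finally show "measure M (Bset x a b a' b') \<le> 2 * real (nat (a - a') + nat (b' - b)) * p ^ nat (D div 2)"
    by (simp add: algebra_simps)
  fix w assume w: "w \<in> space M" "w \<notin> Bset x a b a' b'"
  have inj: "inj (Sig w)" using inj_Sig w by simp
  show "pattern (Sig w) {a'..b'} x = pattern (Sig w) {a..b} x"
  proof (rule pattern_extend)
    show "x \<in> {a..b}" "a' \<le> a" "b \<le> b'" using assms by auto
    show "Sig w y < Sig w x" if "y \<in> {a'..<a}" for y
    proof -
      have "\<not> Sig w x < Sig w y" using w that unfolding Bset_def by auto
      moreover have "Sig w y \<noteq> Sig w x" using inj that assms by (metis atLeastLessThan_iff injD not_le)
      ultimately show ?thesis by linarith
    qed
    show "Sig w x < Sig w y" if "y \<in> {b<..b'}" for y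
    proof -
      have "\<not> Sig w y < Sig w x" using w that unfolding Bset_def by auto
      moreover have "Sig w y \<noteq> Sig w x" using inj that assms by (metis greaterThanAtMost_iff injD not_le)
      ultimately show ?thesis by linarith
    qed
  qed
qed

lemma diff_le_B:
  assumes "E \<in> sets M" "F \<in> sets M" "B \<in> sets M" "E \<subseteq> F \<union> B" "F \<subseteq> E \<union> B"
  shows "\<bar>measure M E - measure M F\<bar> \<le> measure M B"
proof -
  have "measure M E \<le> measure M (F \<union> B)" using assms by (intro P.finite_measure_mono) auto
  also have "\<dots> \<le> measure M F + measure M B" by (rule measure_Un_le[OF assms(2,3)])
  finally have 1: "measure M E \<le> measure M F + measure M B" .
  have "measure M F \<le> measure M (E \<union> B)" using assms by (intro P.finite_measure_mono) auto
  also have "\<dots> \<le> measure M E + measure M B" by (rule measure_Un_le[OF assms(1,3)])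
  finally have 2: "measure M F \<le> measure M E + measure M B" .
  show ?thesis using 1 2 by linarith
qed

lemma Sig_sets: "{w\<in>space M. Sig w i = j} \<in> sets M"
proof -
  have m: "(\<lambda>w. Sig w i) \<in> measurable M (count_space UNIV)" using MZ by (simp add: mallows_Z_def)
  have "(\<lambda>w. Sig w i) -` {j} \<inter> space M \<in> sets M" by (rule measurable_sets[OF m]) auto
  moreover have "(\<lambda>w. Sig w i) -` {j} \<inter> space M = {w\<in>space M. Sig w i = j}" by auto
  ultimately show ?thesis by simp
qed

lemma lim_pat:
  "(\<lambda>n. measure M {w\<in>space M. pattern (Sig w) {- int n..int n} i = j}) \<longlonglongrightarrow> measure M {w\<in>space M. Sig w i = j}"
proof -
  let ?s = "\<lambda>n. indicator {w\<in>space M. pattern (Sig w) {- int n..int n} i = j} :: 'w \<Rightarrow> real"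
  let ?f = "indicator {w\<in>space M. Sig w i = j} :: 'w \<Rightarrow> real"
  have AEc: "AE w in M. \<forall>i. eventually (\<lambda>n::nat. pattern (Sig w) {- int n..int n} i = Sig w i) sequentially"
    using MZ by (simp add: mallows_Z_def)
  have "(\<lambda>n. integral\<^sup>L M (?s n)) \<longlonglongrightarrow> integral\<^sup>L M ?f"
  proof (rule integral_dominated_convergence[where w="\<lambda>_. 1"])
    show "?f \<in> borel_measurable M" by (rule borel_measurable_indicator[OF Sig_sets])
    show "?s n \<in> borel_measurable M" for n by (rule borel_measurable_indicator[OF P_val(1)])
    show "integrable M (\<lambda>_. 1::real)" by simp
    show "AE x in M. norm (?s n x) \<le> 1" for n by (simp add: indicator_def)
    show "AE x in M. (\<lambda>n. ?s n x) \<longlonglongrightarrow> ?f x"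
    proof (rule AE_mp[OF AEc], rule AE_I2, rule impI)
      fix w assume w: "w \<in> space M" and ev: "\<forall>i. eventually (\<lambda>n::nat. pattern (Sig w) {- int n..int n} i = Sig w i) sequentially"
      have "eventually (\<lambda>n. ?s n w = ?f w) sequentially"
        using ev[rule_format, of i] by eventually_elim (use w in \<open>simp add: indicator_def\<close>)
      then show "(\<lambda>n. ?s n w) \<longlonglongrightarrow> ?f w" by (rule tendsto_eventually)
    qed
  qed
  moreover have e: "\<And>Q. integral\<^sup>L M (indicator {w\<in>space M. Q w} :: 'w \<Rightarrow> real) = measure M {w\<in>space M. Q w}"
    by (simp add: integral_indicator) (auto intro!: arg_cong[where f="measure M"])
  ultimately show ?thesis by (simp only: e)
qed

end


context mz begin

lemma filterlim_nat_div:
  fixes k :: int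
  shows "filterlim (\<lambda>n::nat. nat ((int n - k) div 2)) at_top sequentially"
proof (subst filterlim_at_top, rule allI)
  fix Z :: nat
  show "eventually (\<lambda>n. Z \<le> nat ((int n - k) div 2)) sequentially"
  proof (rule eventually_sequentiallyI[of "nat (2 * int Z + \<bar>k\<bar> + 2)"])
    fix n :: nat assume "nat (2 * int Z + \<bar>k\<bar> + 2) \<le> n"
    then have "2 * int Z \<le> int n - k" by linarith
    then have "(2 * int Z) div 2 \<le> (int n - k) div 2" by (rule zdiv_mono1) simp
    then have "int Z \<le> (int n - k) div 2" by simp
    then show "Z \<le> nat ((int n - k) div 2)" by linarith
  qed
qed

lemma transl: "measure M {w\<in>space M. Sig w i = j} = measure M {w\<in>space M. Sig w 0 = j - i}"
proof -
  define A where "A n = measure M {w\<in>space M. pattern (Sig w) {- int n..int n} i = j}" for n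
  define B where "B n = measure M {w\<in>space M. pattern (Sig w) {- int n..int n} 0 = j - i}" for n
  define k where "k = \<bar>i\<bar>"
  define e where "e n = 8 * real_of_int k * p ^ nat ((int n - k) div 2)" for n
  have k0: "0 \<le> k" "i \<le> k" "-i \<le> k" by (auto simp: k_def)
  have bound: "\<bar>A n - B n\<bar> \<le> e n" if nk: "int n \<ge> k" for n
  proof -
    define N where "N = int n"
    have Nk: "N \<ge> k" using nk by (simp add: N_def)
    let ?E1 = "{w\<in>space M. pattern (Sig w) {-N - i..N - i} 0 = j - i}"
    let ?EH = "{w\<in>space M. pattern (Sig w) {-N - k..N + k} 0 = j - i}"
    let ?E2 = "{w\<in>space M. pattern (Sig w) {-N..N} 0 = j - i}"
    let ?B1 = "Bset 0 (-N-i) (N-i) (-N-k) (N+k)"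
    let ?B2 = "Bset 0 (-N) N (-N-k) (N+k)"
    have A1: "A n = measure M ?E1"
    proof -
      have "A n = (\<Sum>\<pi>\<in>{\<pi>\<in>perms {-N..N}. \<pi> i = j}. mallows_weight p {-N..N} \<pi>)"
        by (simp add: A_def P_val(2) N_def)
      also have "\<dots> = (\<Sum>\<pi>\<in>{\<pi>\<in>perms {-N + -i..N + -i}. \<pi> (i + -i) = j + -i}. mallows_weight p {-N + -i..N + -i} \<pi>)"
        by (rule F_shift)
      also have "\<dots> = measure M ?E1" by (simp add: P_val(2))
      finally show ?thesis .
    qed
    have B2: "B n = measure M ?E2" by (simp add: B_def N_def)
    have f1: "?B1 \<in> sets M" "measure M ?B1 \<le> 2 * real (nat (-N-i - (-N-k)) + nat (N+k - (N-i))) * p ^ nat ((N - k) div 2)"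
      "\<And>w. w \<in> space M \<Longrightarrow> w \<notin> ?B1 \<Longrightarrow> pattern (Sig w) {-N-k..N+k} 0 = pattern (Sig w) {-N-i..N-i} 0"
      by (rule Bset_facts[where D="N - k"]; use k0 Nk in linarith)+
    have f2: "?B2 \<in> sets M" "measure M ?B2 \<le> 2 * real (nat (-N - (-N-k)) + nat (N+k - N)) * p ^ nat ((N - k) div 2)"
      "\<And>w. w \<in> space M \<Longrightarrow> w \<notin> ?B2 \<Longrightarrow> pattern (Sig w) {-N-k..N+k} 0 = pattern (Sig w) {-N..N} 0"
      by (rule Bset_facts[where D="N - k"]; use k0 Nk in linarith)+
    have c1: "real (nat (-N-i - (-N-k)) + nat (N+k - (N-i))) = 2 * real_of_int k"
      using k0 by (simp add: k_def)
    have c2: "real (nat (-N - (-N-k)) + nat (N+k - N)) = 2 * real_of_int k"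
      using k0 by simp
    have d1: "\<bar>measure M ?E1 - measure M ?EH\<bar> \<le> measure M ?B1"
      by (rule diff_le_B) (use f1 P_val(1) in auto)
    have d2: "\<bar>measure M ?E2 - measure M ?EH\<bar> \<le> measure M ?B2"
      by (rule diff_le_B) (use f2 P_val(1) in auto)
    have "\<bar>A n - B n\<bar> \<le> measure M ?B1 + measure M ?B2" using d1 d2 A1 B2 by linarith
    also have "\<dots> \<le> 4 * real_of_int k * p ^ nat ((N - k) div 2) + 4 * real_of_int k * p ^ nat ((N - k) div 2)"
      using f1(2) f2(2) c1 c2 by (intro add_mono) auto
    also have "\<dots> = e n" by (simp add: e_def N_def)
    finally show ?thesis .
  qed
  have e0: "e \<longlonglongrightarrow> 0"
  proof -
    have "(\<lambda>n. p ^ nat ((int n - k) div 2)) \<longlonglongrightarrow> 0"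
      by (rule tendsto_power_zero[OF filterlim_nat_div]) (use p0 p1 in auto)
    then have "(\<lambda>n. 8 * real_of_int k * p ^ nat ((int n - k) div 2)) \<longlonglongrightarrow> 8 * real_of_int k * 0"
      by (intro tendsto_mult_left)
    moreover have "e = (\<lambda>n. 8 * real_of_int k * p ^ nat ((int n - k) div 2))"
      by (simp add: fun_eq_iff e_def)
    ultimately show ?thesis by simp
  qed
  have AB0: "(\<lambda>n. A n - B n) \<longlonglongrightarrow> 0"
  proof (rule Lim_null_comparison[OF _ e0])
    show "eventually (\<lambda>n. norm (A n - B n) \<le> e n) sequentially"
      by (rule eventually_sequentiallyI[of "nat k"]) (use bound in auto)
  qed
  have LA: "A \<longlonglongrightarrow> measure M {w\<in>space M. Sig w i = j}" unfolding A_def by (rule lim_pat)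
  have LB: "B \<longlonglongrightarrow> measure M {w\<in>space M. Sig w 0 = j - i}" unfolding B_def by (rule lim_pat)
  have "(\<lambda>n. B n + (A n - B n)) \<longlonglongrightarrow> measure M {w\<in>space M. Sig w 0 = j - i} + 0"
    by (intro tendsto_add LB AB0)
  then have "A \<longlonglongrightarrow> measure M {w\<in>space M. Sig w 0 = j - i}" by simp
  then show ?thesis using LA LIMSEQ_unique by blast
qed

lemma finite_ratio_mw:
  assumes "i \<in> {a..b}" "v \<in> {a..b}" "v+1 \<in> {a..b}"
  shows "p * (\<Sum>\<pi>\<in>{\<pi>\<in>perms {a..b}. \<pi> i = v}. mallows_weight p {a..b} \<pi>) \<le> (\<Sum>\<pi>\<in>{\<pi>\<in>perms {a..b}. \<pi> i = v+1}. mallows_weight p {a..b} \<pi>)"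
    "p * (\<Sum>\<pi>\<in>{\<pi>\<in>perms {a..b}. \<pi> i = v+1}. mallows_weight p {a..b} \<pi>) \<le> (\<Sum>\<pi>\<in>{\<pi>\<in>perms {a..b}. \<pi> i = v}. mallows_weight p {a..b} \<pi>)"
proof -
  let ?Z = "\<Sum>\<tau>\<in>perms {a..b}. p ^ inv_count \<tau> {a..b}"
  have Z: "0 < ?Z" by (rule Z_pos[OF p0]) simp
  have r: "p * (\<Sum>\<pi>\<in>{\<pi>\<in>perms {a..b}. \<pi> i = v}. p ^ inv_count \<pi> {a..b}) \<le> (\<Sum>\<pi>\<in>{\<pi>\<in>perms {a..b}. \<pi> i = v+1}. p ^ inv_count \<pi> {a..b})"
    "p * (\<Sum>\<pi>\<in>{\<pi>\<in>perms {a..b}. \<pi> i = v+1}. p ^ inv_count \<pi> {a..b}) \<le> (\<Sum>\<pi>\<in>{\<pi>\<in>perms {a..b}. \<pi> i = v}. p ^ inv_count \<pi> {a..b})"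
    using ratio_finite[of "{a..b}" i v p] assms p0 p1 by auto
  show "p * (\<Sum>\<pi>\<in>{\<pi>\<in>perms {a..b}. \<pi> i = v}. mallows_weight p {a..b} \<pi>) \<le> (\<Sum>\<pi>\<in>{\<pi>\<in>perms {a..b}. \<pi> i = v+1}. mallows_weight p {a..b} \<pi>)"
    using divide_right_mono[OF r(1), of ?Z] Z unfolding sum_mw by (simp add: times_divide_eq_right)
  show "p * (\<Sum>\<pi>\<in>{\<pi>\<in>perms {a..b}. \<pi> i = v+1}. mallows_weight p {a..b} \<pi>) \<le> (\<Sum>\<pi>\<in>{\<pi>\<in>perms {a..b}. \<pi> i = v}. mallows_weight p {a..b} \<pi>)"
    using divide_right_mono[OF r(2), of ?Z] Z unfolding sum_mw by (simp add: times_divide_eq_right)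
qed

lemma ratio_lim:
  "p * measure M {w\<in>space M. Sig w i = v} \<le> measure M {w\<in>space M. Sig w i = v+1}"
  "p * measure M {w\<in>space M. Sig w i = v+1} \<le> measure M {w\<in>space M. Sig w i = v}"
proof -
  define N where "N = nat (\<bar>i\<bar> + \<bar>v\<bar> + 1)"
  have ev: "eventually (\<lambda>n. p * measure M {w\<in>space M. pattern (Sig w) {- int n..int n} i = v}
       \<le> measure M {w\<in>space M. pattern (Sig w) {- int n..int n} i = v+1}
     \<and> p * measure M {w\<in>space M. pattern (Sig w) {- int n..int n} i = v+1}
       \<le> measure M {w\<in>space M. pattern (Sig w) {- int n..int n} i = v}) sequentially"
  proof (rule eventually_sequentiallyI[of N])
    fix n assume "N \<le> n"
    then have n: "i \<in> {- int n..int n}" "v \<in> {- int n..int n}" "v+1 \<in> {- int n..int n}"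
      by (auto simp: N_def)
    show "p * measure M {w\<in>space M. pattern (Sig w) {- int n..int n} i = v}
       \<le> measure M {w\<in>space M. pattern (Sig w) {- int n..int n} i = v+1}
     \<and> p * measure M {w\<in>space M. pattern (Sig w) {- int n..int n} i = v+1}
       \<le> measure M {w\<in>space M. pattern (Sig w) {- int n..int n} i = v}"
      using finite_ratio_mw[OF n] by (simp add: P_val(2))
  qed
  show "p * measure M {w\<in>space M. Sig w i = v} \<le> measure M {w\<in>space M. Sig w i = v+1}"
    by (rule tendsto_le[OF trivial_limit_sequentially lim_pat tendsto_mult_left[OF lim_pat]])
       (use ev in \<open>auto elim: eventually_mono\<close>)
  show "p * measure M {w\<in>space M. Sig w i = v+1} \<le> measure M {w\<in>space M. Sig w i = v}"
    by (rule tendsto_le[OF trivial_limit_sequentially lim_pat tendsto_mult_left[OF lim_pat]])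
       (use ev in \<open>auto elim: eventually_mono\<close>)
qed

end


context mz begin

definition g :: "int \<Rightarrow> real" where "g k = measure M {w\<in>space M. Sig w 0 = k}"

lemma g_nonneg: "0 \<le> g k" by (simp add: g_def)

lemma Sig_meas: "(\<lambda>w. Sig w i) \<in> measurable M (count_space UNIV)"
  using MZ by (simp add: mallows_Z_def)

lemma fix_integral:
  "(\<integral>\<^sup>+ w. C1 ((\<lambda>v. c - v) \<circ> Sig w) \<partial>M) = (\<integral>\<^sup>+ i. ennreal (g (c - 2*i)) \<partial>count_space UNIV)"
proof -
  have C: "C1 ((\<lambda>v. c - v) \<circ> Sig w) = (\<integral>\<^sup>+ i. (if Sig w i = c - i then 1 else 0) \<partial>count_space UNIV)" for w
  proof -
    have "C1 ((\<lambda>v. c - v) \<circ> Sig w) = (\<integral>\<^sup>+ i. indicator {i. c - Sig w i = i} i \<partial>count_space UNIV)"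
      by (simp add: C1_def)
    also have "\<dots> = (\<integral>\<^sup>+ i. (if Sig w i = c - i then 1 else 0) \<partial>count_space UNIV)"
      by (intro nn_integral_cong) (auto simp: indicator_def)
    finally show ?thesis .
  qed
  have meas: "(\<lambda>w. (if Sig w i = c - i then 1 else 0) :: ennreal) \<in> borel_measurable M" for i
  proof -
    have "(\<lambda>w. (\<lambda>v. (if v = c - i then 1 else 0) :: ennreal) (Sig w i)) \<in> borel_measurable M"
      by (rule measurable_compose[OF Sig_meas]) simp
    then show ?thesis by simp
  qed
  have inner: "(\<integral>\<^sup>+ w. (if Sig w i = c - i then 1 else 0) \<partial>M) = ennreal (g (c - 2*i))" for i
  proof -
    have "(\<integral>\<^sup>+ w. (if Sig w i = c - i then 1 else 0) \<partial>M) = (\<integral>\<^sup>+ w. indicator {w\<in>space M. Sig w i = c - i} w \<partial>M)"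
      by (intro nn_integral_cong) (auto simp: indicator_def)
    also have "\<dots> = emeasure M {w\<in>space M. Sig w i = c - i}" by (simp add: Sig_sets)
    also have "\<dots> = ennreal (measure M {w\<in>space M. Sig w i = c - i})" by (simp add: P.emeasure_eq_measure)
    also have "measure M {w\<in>space M. Sig w i = c - i} = g (c - 2*i)"
      using transl[of i "c - i"] by (simp add: g_def)
    finally show ?thesis .
  qed
  have "(\<integral>\<^sup>+ w. C1 ((\<lambda>v. c - v) \<circ> Sig w) \<partial>M)
      = (\<integral>\<^sup>+ w. \<integral>\<^sup>+ i. (if Sig w i = c - i then 1 else 0) \<partial>count_space UNIV \<partial>M)"
    by (simp add: C)
  also have "\<dots> = (\<integral>\<^sup>+ i. \<integral>\<^sup>+ w. (if Sig w i = c - i then 1 else 0) \<partial>M \<partial>count_space UNIV)"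
    by (rule nn_integral_count_space_nn_integral) (auto intro: meas)
  also have "\<dots> = (\<integral>\<^sup>+ i. ennreal (g (c - 2*i)) \<partial>count_space UNIV)"
    by (simp add: inner)
  finally show ?thesis .
qed

lemma total_one: "(\<integral>\<^sup>+ k. ennreal (g k) \<partial>count_space UNIV) = 1"
proof -
  have meas: "(\<lambda>w. (if Sig w 0 = k then 1 else 0) :: ennreal) \<in> borel_measurable M" for k
  proof -
    have "(\<lambda>w. (\<lambda>v. (if v = k then 1 else 0) :: ennreal) (Sig w 0)) \<in> borel_measurable M"
      by (rule measurable_compose[OF Sig_meas]) simp
    then show ?thesis by simp
  qed
  have inner: "(\<integral>\<^sup>+ w. (if Sig w 0 = k then 1 else 0) \<partial>M) = ennreal (g k)" for k
  proof -
    have "(\<integral>\<^sup>+ w. (if Sig w 0 = k then 1 else 0) \<partial>M) = (\<integral>\<^sup>+ w. indicator {w\<in>space M. Sig w 0 = k} w \<partial>M)"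
      by (intro nn_integral_cong) (auto simp: indicator_def)
    also have "\<dots> = emeasure M {w\<in>space M. Sig w 0 = k}" by (simp add: Sig_sets)
    also have "\<dots> = ennreal (g k)" by (simp add: P.emeasure_eq_measure g_def)
    finally show ?thesis .
  qed
  have one: "(\<integral>\<^sup>+ k. (if Sig w 0 = k then 1 else 0) \<partial>count_space UNIV) = (1::ennreal)" for w
  proof -
    have "(\<integral>\<^sup>+ k. (if Sig w 0 = k then 1 else 0) \<partial>count_space UNIV) = (\<integral>\<^sup>+ k. indicator {Sig w 0} k \<partial>count_space UNIV)"
      by (intro nn_integral_cong) (auto simp: indicator_def)
    also have "\<dots> = emeasure (count_space UNIV) {Sig w 0}" by simp
    also have "\<dots> = 1" by simp
    finally show ?thesis .
  qed
  have "(\<integral>\<^sup>+ k. ennreal (g k) \<partial>count_space UNIV) = (\<integral>\<^sup>+ k. \<integral>\<^sup>+ w. (if Sig w 0 = k then 1 else 0) \<partial>M \<partial>count_space UNIV)"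
    by (simp add: inner)
  also have "\<dots> = (\<integral>\<^sup>+ w. \<integral>\<^sup>+ k. (if Sig w 0 = k then 1 else 0) \<partial>count_space UNIV \<partial>M)"
    by (rule nn_integral_count_space_nn_integral[symmetric]) (auto intro: meas)
  also have "\<dots> = (\<integral>\<^sup>+ w. 1 \<partial>M)" by (simp add: one)
  also have "\<dots> = 1" by (simp add: P.emeasure_space_1)
  finally show ?thesis .
qed

lemma split_even_odd:
  fixes G :: "int \<Rightarrow> ennreal"
  shows "(\<integral>\<^sup>+ k. G k \<partial>count_space UNIV) = (\<integral>\<^sup>+ i. G (2*i) \<partial>count_space UNIV) + (\<integral>\<^sup>+ i. G (2*i+1) \<partial>count_space UNIV)"
proof -
  let ?Ev = "range (\<lambda>i::int. 2*i)"
  let ?Od = "range (\<lambda>i::int. 2*i+1)"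
  have ind: "indicator ?Ev k + indicator ?Od k = (1::ennreal)" for k :: int
  proof (cases "even k")
    case True
    then obtain i where "k = 2*i" by (metis evenE)
    moreover have "2*i \<notin> ?Od" by (auto, presburger)
    ultimately show ?thesis by (auto simp: indicator_def)
  next
    case False
    then obtain i where "k = 2*i+1" by (metis oddE)
    moreover have "2*i+1 \<notin> ?Ev" by (auto, presburger)
    ultimately show ?thesis by (auto simp: indicator_def)
  qed
  have "(\<integral>\<^sup>+ k. G k \<partial>count_space UNIV) = (\<integral>\<^sup>+ k. G k * indicator ?Ev k + G k * indicator ?Od k \<partial>count_space UNIV)"
    by (intro nn_integral_cong) (simp add: distrib_left[symmetric] ind)
  also have "\<dots> = (\<integral>\<^sup>+ k. G k * indicator ?Ev k \<partial>count_space UNIV) + (\<integral>\<^sup>+ k. G k * indicator ?Od k \<partial>count_space UNIV)"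
    by (rule nn_integral_add) auto
  also have "(\<integral>\<^sup>+ k. G k * indicator ?Ev k \<partial>count_space UNIV) = (\<integral>\<^sup>+ k. G k \<partial>count_space ?Ev)"
    by (rule nn_integral_count_space_indicator[symmetric]) simp
  also have "\<dots> = (\<integral>\<^sup>+ i. G (2*i) \<partial>count_space UNIV)"
    by (rule nn_integral_bij_count_space[symmetric]) (auto intro!: inj_on_imp_bij_betw inj_onI)
  also have "(\<integral>\<^sup>+ k. G k * indicator ?Od k \<partial>count_space UNIV) = (\<integral>\<^sup>+ k. G k \<partial>count_space ?Od)"
    by (rule nn_integral_count_space_indicator[symmetric]) simp
  also have "\<dots> = (\<integral>\<^sup>+ i. G (2*i+1) \<partial>count_space UNIV)"
    by (rule nn_integral_bij_count_space[symmetric]) (auto intro!: inj_on_imp_bij_betw inj_onI)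
  finally show ?thesis .
qed

lemma neg_reindex:
  fixes G :: "int \<Rightarrow> ennreal"
  shows "(\<integral>\<^sup>+ i. G (-i) \<partial>count_space UNIV) = (\<integral>\<^sup>+ i. G i \<partial>count_space UNIV)"
  by (rule nn_integral_bij_count_space) (auto intro!: bij_betwI[where g=uminus])

definition SE where "SE = (\<integral>\<^sup>+ i. ennreal (g (2*i)) \<partial>count_space UNIV)"
definition SO where "SO = (\<integral>\<^sup>+ i. ennreal (g (2*i+1)) \<partial>count_space UNIV)"

lemma EO_sum: "SE + SO = 1"
  using total_one split_even_odd[of "\<lambda>k. ennreal (g k)"] by (simp add: SE_def SO_def)

lemma EO_ratio: "ennreal p * SE \<le> SO" "ennreal p * SO \<le> SE"
proof -
  have r1: "ennreal p * ennreal (g (2*i)) \<le> ennreal (g (2*i+1))" for i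
    using ratio_lim(1)[of 0 "2*i"] p0 g_nonneg by (simp add: g_def ennreal_mult'[symmetric] ennreal_leI)
  have r2: "ennreal p * ennreal (g (2*i+1)) \<le> ennreal (g (2*i))" for i
    using ratio_lim(2)[of 0 "2*i"] p0 g_nonneg by (simp add: g_def ennreal_mult'[symmetric] ennreal_leI)
  have "ennreal p * SE = (\<integral>\<^sup>+ i. ennreal p * ennreal (g (2*i)) \<partial>count_space UNIV)"
    unfolding SE_def by (rule nn_integral_cmult[symmetric]) simp
  also have "\<dots> \<le> SO" unfolding SO_def by (intro nn_integral_mono r1)
  finally show "ennreal p * SE \<le> SO" .
  have "ennreal p * SO = (\<integral>\<^sup>+ i. ennreal p * ennreal (g (2*i+1)) \<partial>count_space UNIV)"
    unfolding SO_def by (rule nn_integral_cmult[symmetric]) simp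
  also have "\<dots> \<le> SE" unfolding SE_def by (intro nn_integral_mono r2)
  finally show "ennreal p * SO \<le> SE" .
qed

lemma co_SE: "(\<integral>\<^sup>+ w. C1 (r_map \<circ> Sig w) \<partial>M) = SE"
proof -
  have "r_map = (\<lambda>v. 0 - v)" by (simp add: fun_eq_iff r_map_def)
  then have "(\<integral>\<^sup>+ w. C1 (r_map \<circ> Sig w) \<partial>M) = (\<integral>\<^sup>+ i. ennreal (g (0 - 2*i)) \<partial>count_space UNIV)"
    using fix_integral[of 0] by simp
  also have "\<dots> = (\<integral>\<^sup>+ i. ennreal (g (2*(-i))) \<partial>count_space UNIV)" by simp
  also have "\<dots> = SE" unfolding SE_def by (rule neg_reindex[of "\<lambda>i. ennreal (g (2*i))"])
  finally show ?thesis .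
qed

lemma ce_SO: "(\<integral>\<^sup>+ w. C1 (rho_map \<circ> Sig w) \<partial>M) = SO"
proof -
  have "rho_map = (\<lambda>v. 1 - v)" by (simp add: fun_eq_iff rho_map_def)
  then have "(\<integral>\<^sup>+ w. C1 (rho_map \<circ> Sig w) \<partial>M) = (\<integral>\<^sup>+ i. ennreal (g (1 - 2*i)) \<partial>count_space UNIV)"
    using fix_integral[of 1] by simp
  also have "\<dots> = (\<integral>\<^sup>+ i. ennreal (g (2*(-i)+1)) \<partial>count_space UNIV)" by (simp add: algebra_simps)
  also have "\<dots> = SO" unfolding SO_def by (rule neg_reindex[of "\<lambda>i. ennreal (g (2*i+1))"])
  finally show ?thesis .
qed

end

lemma final_arith:
  fixes X Y :: ennreal and q :: real
  assumes q: "q > 1" and s: "X + Y = 1" and r1: "ennreal (1/q) * X \<le> Y" and r2: "ennreal (1/q) * Y \<le> X"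
  shows "ennreal (1/(1+q)) \<le> X \<and> X \<le> ennreal (q/(1+q))"
proof -
  have Ef: "X \<noteq> \<top>" "Y \<noteq> \<top>" using s by (auto simp: top_add add_top)
  obtain u where u: "X = ennreal u" "0 \<le> u" using Ef(1) by (cases X) auto
  obtain v where v: "Y = ennreal v" "0 \<le> v" using Ef(2) by (cases Y) auto
  have s': "u + v = 1" using s u v by (metis ennreal_1 ennreal_inj ennreal_plus add_nonneg_nonneg zero_le_one)
  have q0: "0 < 1/q" using q by simp
  have r1': "(1/q) * u \<le> v" using r1 u v q0 by (simp add: ennreal_mult'[symmetric])
  have r2': "(1/q) * v \<le> u" using r2 u v q0 by (simp add: ennreal_mult'[symmetric])
  have a: "u \<le> q/(1+q)"
  proof -
    have "u + u / q \<le> 1" using s' r1' by simp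
    then have "(u + u/q) * q \<le> q" using q by (simp add: mult_right_mono[of _ 1 q])
    then have "u * (1 + q) \<le> q" using q by (simp add: algebra_simps)
    then show ?thesis using q by (simp add: pos_le_divide_eq)
  qed
  have b: "1/(1+q) \<le> u"
  proof -
    have "v \<le> q/(1+q)"
    proof -
      have "v + v / q \<le> 1" using s' r2' by simp
      then have "(v + v/q) * q \<le> q" using q by (simp add: mult_right_mono[of _ 1 q])
      then have "v * (1 + q) \<le> q" using q by (simp add: algebra_simps)
      then show ?thesis using q by (simp add: pos_le_divide_eq)
    qed
    then have "1 - q/(1+q) \<le> u" using s' by simp
    moreover have "1 - q/(1+q) = 1/(1+q)" using q by (simp add: field_simps)
    ultimately show ?thesis by simp
  qed
  show ?thesis using a b u by (simp add: ennreal_leI)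
qed

theorem lemma8p2:
  fixes q :: real and M :: "'w measure" and Sig :: "'w \<Rightarrow> int \<Rightarrow> int"
  assumes "q > 1"
    and "mallows_Z M Sig (1 / q)"
  shows "ennreal (1 / (1 + q)) \<le> (\<integral>\<^sup>+ w. C1 (rho_map \<circ> Sig w) \<partial>M)
       \<and> (\<integral>\<^sup>+ w. C1 (rho_map \<circ> Sig w) \<partial>M) \<le> ennreal (q / (1 + q))
       \<and> ennreal (1 / (1 + q)) \<le> (\<integral>\<^sup>+ w. C1 (r_map \<circ> Sig w) \<partial>M)
       \<and> (\<integral>\<^sup>+ w. C1 (r_map \<circ> Sig w) \<partial>M) \<le> ennreal (q / (1 + q))"
proof -
  interpret mz M Sig "1/q"
    by unfold_locales (use assms in auto)
  have s: "SE + SO = 1" "SO + SE = 1" using EO_sum by (auto simp: add.commute)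
  have A: "ennreal (1/(1+q)) \<le> SO \<and> SO \<le> ennreal (q/(1+q))"
    by (rule final_arith[OF assms(1) s(2) EO_ratio(2) EO_ratio(1)])
  have B: "ennreal (1/(1+q)) \<le> SE \<and> SE \<le> ennreal (q/(1+q))"
    by (rule final_arith[OF assms(1) s(1) EO_ratio(1) EO_ratio(2)])
  show ?thesis using A B by (simp add: co_SE ce_SO)
qed


end
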